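(* Let $f_0,f_1$ be finitely supported probability distributions on $G$ and let $(f_t)_{t\in[0,1]}$ be a $W_1$-geodesic joining them. Let $0\le s\le t\le1$ and let $x,y$ be adjacent vertices such that $x\to y$ for the $W_1$-orientation with respect to $(f_s,f_t)$. Then $x\to y$ for the $W_1$-orientation with respect to $(f_0,f_1)$.
   Context: $G$ is a connected, locally finite graph with graph distance $d$. Paths $\gamma(0),\dots,\gamma(n)$ (consecutive vertices adjacent) have length $L(\gamma)=n$, $e_0(\gamma)=\gamma(0)$, $e_1(\gamma)=\gamma(n)$, and are geodesics if $n=d(\gamma(0),\gamma(n))$. Probability distributions are $f:G\to[0,\infty)$ with $\sum f=1$. For probability distributions $\mu,\nu$: $W_1(\mu,\nu)=\inf_\pi\sum d(x,y)\pi(x,y)$ over couplings $\pi$ (nonnegative functions on $G\times G$ with marginals $\mu,\nu$), $\Pi_1(\mu,\nu)$ is the set of minimizers, $\mathcal{C}(\mu,\nu)=\{(x,y):\pi(x,y)>0\text{ for some }\pi\in\Pi_1(\mu,\nu)\}$, and the $W_1$-orientation with respect to $(\mu,\nu)$ declares $x\to y$ (for adjacent $x,y$) iff there exist a geodesic $\gamma$ with $(e_0(\gamma),e_1(\gamma))\in\mathcal{C}(\mu,\nu)$ and $k$ with $\gamma(k)=x$, $\gamma(k+1)=y$. A $W_1$-geodesic is a family $(f_t)_{t\in[0,1]}$ of probability distributions with $W_1(f_s,f_t)=|t-s|W_1(f_0,f_1)$ for all $s,t\in[0,1]$. *)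

theory Defs
  imports "HOL-Analysis.Analysis"
begin

text \<open>A graph is given by a vertex type 'a (the whole type is the vertex set G)
 and an adjacency relation E.\<close>

definition simple_graph :: "('a \<Rightarrow> 'a \<Rightarrow> bool) \<Rightarrow> bool" where
  "simple_graph E \<longleftrightarrow> (\<forall>x y. E x y \<longrightarrow> E y x) \<and> (\<forall>x. \<not> E x x)"

definition is_path :: "('a \<Rightarrow> 'a \<Rightarrow> bool) \<Rightarrow> (nat \<Rightarrow> 'a) \<Rightarrow> nat \<Rightarrow> bool" where
  "is_path E \<gamma> n \<longleftrightarrow> (\<forall>k<n. E (\<gamma> k) (\<gamma> (Suc k)))"

definition connected_graph :: "('a \<Rightarrow> 'a \<Rightarrow> bool) \<Rightarrow> bool" where
  "connected_graph E \<longleftrightarrow> (\<forall>x y. \<exists>\<gamma> n. is_path E \<gamma> n \<and> \<gamma> 0 = x \<and> \<gamma> n = y)"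

definition locally_finite :: "('a \<Rightarrow> 'a \<Rightarrow> bool) \<Rightarrow> bool" where
  "locally_finite E \<longleftrightarrow> (\<forall>x. finite {y. E x y})"

definition gdist :: "('a \<Rightarrow> 'a \<Rightarrow> bool) \<Rightarrow> 'a \<Rightarrow> 'a \<Rightarrow> nat" where
  "gdist E x y = (LEAST n. \<exists>\<gamma>. is_path E \<gamma> n \<and> \<gamma> 0 = x \<and> \<gamma> n = y)"

definition is_geodesic :: "('a \<Rightarrow> 'a \<Rightarrow> bool) \<Rightarrow> (nat \<Rightarrow> 'a) \<Rightarrow> nat \<Rightarrow> bool" where
  "is_geodesic E \<gamma> n \<longleftrightarrow> is_path E \<gamma> n \<and> n = gdist E (\<gamma> 0) (\<gamma> n)"

definition prob_dist :: "('a \<Rightarrow> real) \<Rightarrow> bool" where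
  "prob_dist f \<longleftrightarrow> (\<forall>x. 0 \<le> f x) \<and> (f has_sum 1) UNIV"

definition coupling :: "('a \<Rightarrow> real) \<Rightarrow> ('a \<Rightarrow> real) \<Rightarrow> ('a \<times> 'a \<Rightarrow> real) \<Rightarrow> bool" where
  "coupling \<mu> \<nu> \<pi> \<longleftrightarrow> (\<forall>p. 0 \<le> \<pi> p)
     \<and> (\<forall>x. ((\<lambda>y. \<pi> (x, y)) has_sum \<mu> x) UNIV)
     \<and> (\<forall>y. ((\<lambda>x. \<pi> (x, y)) has_sum \<nu> y) UNIV)"

definition tcost :: "('a \<Rightarrow> 'a \<Rightarrow> bool) \<Rightarrow> ('a \<times> 'a \<Rightarrow> real) \<Rightarrow> ennreal" where
  "tcost E \<pi> = (\<Sum>\<^sub>\<infinity>p. ennreal (real (gdist E (fst p) (snd p)) * \<pi> p))"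

definition W1 :: "('a \<Rightarrow> 'a \<Rightarrow> bool) \<Rightarrow> ('a \<Rightarrow> real) \<Rightarrow> ('a \<Rightarrow> real) \<Rightarrow> ennreal" where
  "W1 E \<mu> \<nu> = (INF \<pi>\<in>{\<pi>. coupling \<mu> \<nu> \<pi>}. tcost E \<pi>)"

definition Pi1 :: "('a \<Rightarrow> 'a \<Rightarrow> bool) \<Rightarrow> ('a \<Rightarrow> real) \<Rightarrow> ('a \<Rightarrow> real) \<Rightarrow> ('a \<times> 'a \<Rightarrow> real) set" where
  "Pi1 E \<mu> \<nu> = {\<pi>. coupling \<mu> \<nu> \<pi> \<and> tcost E \<pi> = W1 E \<mu> \<nu>}"

definition Csupp :: "('a \<Rightarrow> 'a \<Rightarrow> bool) \<Rightarrow> ('a \<Rightarrow> real) \<Rightarrow> ('a \<Rightarrow> real) \<Rightarrow> ('a \<times> 'a) set" where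
  "Csupp E \<mu> \<nu> = {p. \<exists>\<pi>\<in>Pi1 E \<mu> \<nu>. \<pi> p > 0}"

definition W1_orient :: "('a \<Rightarrow> 'a \<Rightarrow> bool) \<Rightarrow> ('a \<Rightarrow> real) \<Rightarrow> ('a \<Rightarrow> real) \<Rightarrow> 'a \<Rightarrow> 'a \<Rightarrow> bool" where
  "W1_orient E \<mu> \<nu> x y \<longleftrightarrow> E x y \<and>
     (\<exists>\<gamma> n k. is_geodesic E \<gamma> n \<and> (\<gamma> 0, \<gamma> n) \<in> Csupp E \<mu> \<nu>
        \<and> k < n \<and> \<gamma> k = x \<and> \<gamma> (Suc k) = y)"

definition W1_geodesic :: "('a \<Rightarrow> 'a \<Rightarrow> bool) \<Rightarrow> (real \<Rightarrow> 'a \<Rightarrow> real) \<Rightarrow> bool" where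
  "W1_geodesic E f \<longleftrightarrow> (\<forall>t\<in>{0..1}. prob_dist (f t)) \<and>
     (\<forall>s\<in>{0..1}. \<forall>t\<in>{0..1}. W1 E (f s) (f t) = ennreal \<bar>t - s\<bar> * W1 E (f 0) (f 1))"

end

theory Submission
  imports Defs
begin


lemma enn_summable[simp]: "(f::'a\<Rightarrow>ennreal) summable_on A"
  by (rule nonneg_summable_on_complete) simp

lemma enn_infsum_SUP:
  fixes f :: "'a \<Rightarrow> ennreal"
  shows "infsum f A = (SUP F\<in>{F. finite F \<and> F\<subseteq>A}. sum f F)"
  by (rule nonneg_infsum_complete) simp

lemma enn_infsum_cmult_left:
  fixes f :: "'a \<Rightarrow> ennreal"
  shows "(\<Sum>\<^sub>\<infinity>x\<in>A. c * f x) = c * (\<Sum>\<^sub>\<infinity>x\<in>A. f x)"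
  by (simp add: enn_infsum_SUP SUP_mult_left_ennreal sum_distrib_left)

lemma enn_infsum_cmult_right:
  fixes f :: "'a \<Rightarrow> ennreal"
  shows "(\<Sum>\<^sub>\<infinity>x\<in>A. f x * c) = (\<Sum>\<^sub>\<infinity>x\<in>A. f x) * c"
  using enn_infsum_cmult_left[of c f A] by (simp add: mult.commute)

lemma enn_infsum_add:
  fixes f g :: "'a \<Rightarrow> ennreal"
  shows "(\<Sum>\<^sub>\<infinity>x\<in>A. f x + g x) = (\<Sum>\<^sub>\<infinity>x\<in>A. f x) + (\<Sum>\<^sub>\<infinity>x\<in>A. g x)"
  by (rule infsum_add) simp_all

lemma enn_infsum_mono:
  fixes f g :: "'a \<Rightarrow> ennreal"
  shows "(\<And>x. x \<in> A \<Longrightarrow> f x \<le> g x) \<Longrightarrow> infsum f A \<le> infsum g A"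
  by (rule infsum_mono) simp_all

lemma enn_infsum_subset:
  fixes f :: "'a \<Rightarrow> ennreal"
  shows "A \<subseteq> B \<Longrightarrow> infsum f A \<le> infsum f B"
  by (rule infsum_mono_neutral) auto

lemma enn_le_infsum:
  fixes f :: "'a \<Rightarrow> ennreal"
  shows "x \<in> A \<Longrightarrow> f x \<le> infsum f A"
  using enn_infsum_subset[of "{x}" A f] by simp

lemma enn_infsum_Sigma_finite:
  fixes f :: "'a \<Rightarrow> 'b \<Rightarrow> ennreal"
  assumes "finite G"
  shows "(\<Sum>\<^sub>\<infinity>p\<in>G \<times> B. f (fst p) (snd p)) = (\<Sum>x\<in>G. \<Sum>\<^sub>\<infinity>y\<in>B. f x y)"
  using assms
proof (induction G rule: finite_induct)
  case empty
  then show ?case by simp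
next
  case (insert x G)
  have "insert x G \<times> B = (Pair x ` B) \<union> (G \<times> B)" by auto
  moreover have "(Pair x ` B) \<inter> (G \<times> B) = {}" using insert by auto
  ultimately have "(\<Sum>\<^sub>\<infinity>p\<in>insert x G \<times> B. f (fst p) (snd p))
     = (\<Sum>\<^sub>\<infinity>p\<in>Pair x ` B. f (fst p) (snd p)) + (\<Sum>\<^sub>\<infinity>p\<in>G \<times> B. f (fst p) (snd p))"
    by (simp add: infsum_Un_disjoint)
  also have "(\<Sum>\<^sub>\<infinity>p\<in>Pair x ` B. f (fst p) (snd p)) = (\<Sum>\<^sub>\<infinity>y\<in>B. f x y)"
    by (subst infsum_reindex) (auto simp: inj_on_def o_def)
  finally show ?case using insert by simp
qed

lemma enn_infsum_Sigma:
  fixes f :: "'a \<Rightarrow> 'b \<Rightarrow> ennreal"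
  shows "(\<Sum>\<^sub>\<infinity>p. f (fst p) (snd p)) = (\<Sum>\<^sub>\<infinity>x. \<Sum>\<^sub>\<infinity>y. f x y)"
proof (rule antisym)
  show "(\<Sum>\<^sub>\<infinity>p. f (fst p) (snd p)) \<le> (\<Sum>\<^sub>\<infinity>x. \<Sum>\<^sub>\<infinity>y. f x y)"
    unfolding enn_infsum_SUP[of "\<lambda>p. f (fst p) (snd p)"]
  proof (rule SUP_least)
    fix S assume "S \<in> {F. finite F \<and> F \<subseteq> (UNIV::('a\<times>'b) set)}"
    then have S: "finite S" by auto
    have "sum (\<lambda>p. f (fst p) (snd p)) S = (\<Sum>\<^sub>\<infinity>p\<in>S. f (fst p) (snd p))" using S by simp
    also have "\<dots> \<le> (\<Sum>\<^sub>\<infinity>p\<in>fst ` S \<times> UNIV. f (fst p) (snd p))"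
      by (rule enn_infsum_subset) force
    also have "\<dots> = (\<Sum>x\<in>fst ` S. \<Sum>\<^sub>\<infinity>y. f x y)"
      using S by (simp add: enn_infsum_Sigma_finite)
    also have "\<dots> = (\<Sum>\<^sub>\<infinity>x\<in>fst ` S. \<Sum>\<^sub>\<infinity>y. f x y)" using S by simp
    also have "\<dots> \<le> (\<Sum>\<^sub>\<infinity>x. \<Sum>\<^sub>\<infinity>y. f x y)" by (rule enn_infsum_subset) simp
    finally show "sum (\<lambda>p. f (fst p) (snd p)) S \<le> (\<Sum>\<^sub>\<infinity>x. \<Sum>\<^sub>\<infinity>y. f x y)" .
  qed
next
  show "(\<Sum>\<^sub>\<infinity>x. \<Sum>\<^sub>\<infinity>y. f x y) \<le> (\<Sum>\<^sub>\<infinity>p. f (fst p) (snd p))"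
    unfolding enn_infsum_SUP[of "\<lambda>x. \<Sum>\<^sub>\<infinity>y. f x y"]
  proof (rule SUP_least)
    fix G assume "G \<in> {F. finite F \<and> F \<subseteq> (UNIV::'a set)}"
    then have G: "finite G" by auto
    have "sum (\<lambda>x. \<Sum>\<^sub>\<infinity>y. f x y) G = (\<Sum>\<^sub>\<infinity>p\<in>G \<times> UNIV. f (fst p) (snd p))"
      using G by (simp add: enn_infsum_Sigma_finite)
    also have "\<dots> \<le> (\<Sum>\<^sub>\<infinity>p. f (fst p) (snd p))" by (rule enn_infsum_subset) simp
    finally show "sum (\<lambda>x. \<Sum>\<^sub>\<infinity>y. f x y) G \<le> (\<Sum>\<^sub>\<infinity>p. f (fst p) (snd p))" .
  qed
qed

lemma enn_infsum_swap:
  fixes f :: "'a \<Rightarrow> 'b \<Rightarrow> ennreal"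
  shows "(\<Sum>\<^sub>\<infinity>x. \<Sum>\<^sub>\<infinity>y. f x y) = (\<Sum>\<^sub>\<infinity>y. \<Sum>\<^sub>\<infinity>x. f x y)"
proof -
  have "(\<Sum>\<^sub>\<infinity>x. \<Sum>\<^sub>\<infinity>y. f x y) = (\<Sum>\<^sub>\<infinity>p. f (fst p) (snd p))" by (rule enn_infsum_Sigma[symmetric])
  also have "\<dots> = (\<Sum>\<^sub>\<infinity>p. f (snd (prod.swap p)) (fst (prod.swap p)))" by simp
  also have "\<dots> = (\<Sum>\<^sub>\<infinity>q. f (snd q) (fst q))"
    by (rule infsum_reindex_bij_betw) (simp add: bij_betw_def)
  also have "\<dots> = (\<Sum>\<^sub>\<infinity>y. \<Sum>\<^sub>\<infinity>x. f x y)" by (rule enn_infsum_Sigma)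
  finally show ?thesis .
qed

lemma enn_infsum_pair:
  fixes F :: "'a \<times> 'b \<Rightarrow> ennreal"
  shows "(\<Sum>\<^sub>\<infinity>p. F p) = (\<Sum>\<^sub>\<infinity>x. \<Sum>\<^sub>\<infinity>y. F (x, y))"
  using enn_infsum_Sigma[of "\<lambda>x y. F (x,y)"] by simp

lemma enn_infsum_bij:
  fixes F :: "'a \<Rightarrow> ennreal"
  assumes "bij \<sigma>"
  shows "(\<Sum>\<^sub>\<infinity>z. F z) = (\<Sum>\<^sub>\<infinity>w. F (\<sigma> w))"
  using infsum_reindex_bij_betw[of \<sigma> UNIV UNIV F] assms by simp

lemma has_sum_enn:
  fixes f :: "'a \<Rightarrow> real"
  assumes "(f has_sum s) A" "\<And>x. x \<in> A \<Longrightarrow> 0 \<le> f x"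
  shows "(\<Sum>\<^sub>\<infinity>x\<in>A. ennreal (f x)) = ennreal s"
proof -
  have s: "s = infsum f A" using assms(1) by (simp add: infsumI)
  have "ennreal (infsum f A) = (SUP F\<in>{F. finite F \<and> F \<subseteq> A}. (ennreal (sum f F)))"
    by (rule infsum_nonneg_is_SUPREMUM_ennreal) (use assms in \<open>auto simp: summable_on_def\<close>)
  also have "\<dots> = (SUP F\<in>{F. finite F \<and> F \<subseteq> A}. (\<Sum>x\<in>F. ennreal (f x)))"
    by (intro SUP_cong refl) (use assms(2) in \<open>auto intro!: sum_ennreal[symmetric]\<close>)
  also have "\<dots> = (\<Sum>\<^sub>\<infinity>x\<in>A. ennreal (f x))" by (simp add: enn_infsum_SUP)
  finally show ?thesis using s by simp
qed



lemma gdist_path: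
  assumes "connected_graph E"
  shows "\<exists>\<gamma>. is_path E \<gamma> (gdist E x y) \<and> \<gamma> 0 = x \<and> \<gamma> (gdist E x y) = y"
proof -
  from assms obtain \<gamma> n where "is_path E \<gamma> n \<and> \<gamma> 0 = x \<and> \<gamma> n = y"
    unfolding connected_graph_def by blast
  then have "\<exists>n \<gamma>. is_path E \<gamma> n \<and> \<gamma> 0 = x \<and> \<gamma> n = y" by blast
  then show ?thesis unfolding gdist_def by (rule LeastI_ex)
qed

lemma gdist_le:
  assumes "is_path E \<gamma> n" "\<gamma> 0 = x" "\<gamma> n = y"
  shows "gdist E x y \<le> n"
  unfolding gdist_def by (rule Least_le) (use assms in blast)

definition pcat :: "(nat \<Rightarrow> 'a) \<Rightarrow> nat \<Rightarrow> (nat \<Rightarrow> 'a) \<Rightarrow> nat \<Rightarrow> 'a" where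
  "pcat \<alpha> n \<beta> i = (if i \<le> n then \<alpha> i else \<beta> (i - n))"

lemma pcat_path:
  assumes "is_path E \<alpha> n" "is_path E \<beta> m" "\<alpha> n = \<beta> 0"
  shows "is_path E (pcat \<alpha> n \<beta>) (n + m)"
  unfolding is_path_def
proof (intro allI impI)
  fix k assume k: "k < n + m"
  show "E (pcat \<alpha> n \<beta> k) (pcat \<alpha> n \<beta> (Suc k))"
  proof (cases "k < n")
    case True
    then show ?thesis using assms(1) by (auto simp: pcat_def is_path_def)
  next
    case False
    then have "k - n < m" "Suc k - n = Suc (k - n)" using k by auto
    then show ?thesis using assms False
      by (cases "k = n") (auto simp: pcat_def is_path_def)
  qed
qed

lemma pcat_0: "pcat \<alpha> n \<beta> 0 = \<alpha> 0" by (simp add: pcat_def)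
lemma pcat_end: "\<alpha> n = \<beta> 0 \<Longrightarrow> pcat \<alpha> n \<beta> (n + m) = \<beta> m"
  by (auto simp: pcat_def)

lemma gdist_triangle:
  assumes "connected_graph E"
  shows "gdist E x z \<le> gdist E x y + gdist E y z"
proof -
  obtain \<alpha> where a: "is_path E \<alpha> (gdist E x y)" "\<alpha> 0 = x" "\<alpha> (gdist E x y) = y"
    using gdist_path[OF assms] by blast
  obtain \<beta> where b: "is_path E \<beta> (gdist E y z)" "\<beta> 0 = y" "\<beta> (gdist E y z) = z"
    using gdist_path[OF assms] by blast
  show ?thesis
    by (rule gdist_le[OF pcat_path[OF a(1) b(1)]]) (use a b in \<open>auto simp: pcat_0 pcat_end\<close>)
qed

lemma geodesic_through:
  assumes conn: "connected_graph E"
    and g: "is_geodesic E \<gamma> n" and kn: "k < n" and gx: "\<gamma> k = x" and gy: "\<gamma> (Suc k) = y"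
    and eq: "gdist E a (\<gamma> 0) + n + gdist E (\<gamma> n) b = gdist E a b"
  shows "\<exists>\<delta> N j. is_geodesic E \<delta> N \<and> \<delta> 0 = a \<and> \<delta> N = b \<and> j < N \<and> \<delta> j = x \<and> \<delta> (Suc j) = y"
proof -
  let ?u = "\<gamma> 0" and ?v = "\<gamma> n"
  obtain \<alpha> where a: "is_path E \<alpha> (gdist E a ?u)" "\<alpha> 0 = a" "\<alpha> (gdist E a ?u) = ?u"
    using gdist_path[OF conn] by blast
  obtain \<beta> where b: "is_path E \<beta> (gdist E ?v b)" "\<beta> 0 = ?v" "\<beta> (gdist E ?v b) = b"
    using gdist_path[OF conn] by blast
  define d1 where "d1 = gdist E a ?u"
  define d2 where "d2 = gdist E ?v b"
  have gp: "is_path E \<gamma> n" using g by (simp add: is_geodesic_def)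
  have p1: "is_path E (pcat \<alpha> d1 \<gamma>) (d1 + n)"
    using pcat_path[OF a(1) gp] a(3) by (simp add: d1_def)
  have e1: "pcat \<alpha> d1 \<gamma> (d1 + n) = ?v" using a(3) by (simp add: pcat_end d1_def)
  define \<delta> where "\<delta> = pcat (pcat \<alpha> d1 \<gamma>) (d1 + n) \<beta>"
  have p2: "is_path E \<delta> (d1 + n + d2)"
    unfolding \<delta>_def by (rule pcat_path[OF p1]) (use b e1 in \<open>simp_all add: d2_def\<close>)
  have d0: "\<delta> 0 = a" using a by (simp add: \<delta>_def pcat_0)
  have dN: "\<delta> (d1 + n + d2) = b" using b e1 by (simp add: \<delta>_def pcat_end d2_def)
  have geo: "is_geodesic E \<delta> (d1 + n + d2)"
    unfolding is_geodesic_def using p2 d0 dN eq by (simp add: d1_def d2_def)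
  have j1: "\<delta> (d1 + k) = x"
    using kn gx a(3) by (auto simp: \<delta>_def pcat_def d1_def)
  have j2: "\<delta> (Suc (d1 + k)) = y"
    using kn gy a(3) by (auto simp: \<delta>_def pcat_def d1_def)
  show ?thesis
    by (rule exI[of _ \<delta>], rule exI[of _ "d1 + n + d2"], rule exI[of _ "d1 + k"])
       (use geo d0 dN j1 j2 kn in auto)
qed



lemma enn_term_le:
  fixes h :: "'a \<Rightarrow> real"
  assumes "\<And>x. 0 \<le> h x" "(\<Sum>\<^sub>\<infinity>x. ennreal (h x)) = ennreal s" "0 \<le> s"
  shows "h x \<le> s"
proof -
  have "ennreal (h x) \<le> ennreal s" using enn_le_infsum[of x UNIV "\<lambda>x. ennreal (h x)"] assms(2) by simp
  then show ?thesis using assms by (simp add: ennreal_le_iff)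
qed

lemma glue:
  fixes \<alpha> :: "'x \<Rightarrow> 'y \<Rightarrow> real" and \<beta> :: "'y \<Rightarrow> 'z \<Rightarrow> real" and g :: "'y \<Rightarrow> real"
  assumes a0: "\<And>x y. 0 \<le> \<alpha> x y" and b0: "\<And>y z. 0 \<le> \<beta> y z" and g0: "\<And>y. 0 \<le> g y"
    and am: "\<And>y. (\<Sum>\<^sub>\<infinity>x. ennreal (\<alpha> x y)) = ennreal (g y)"
    and bm: "\<And>y. (\<Sum>\<^sub>\<infinity>z. ennreal (\<beta> y z)) = ennreal (g y)"
  shows glue1: "(\<Sum>\<^sub>\<infinity>z. ennreal (\<alpha> x y * \<beta> y z / g y)) = ennreal (\<alpha> x y)"
    and glue2: "(\<Sum>\<^sub>\<infinity>x. ennreal (\<alpha> x y * \<beta> y z / g y)) = ennreal (\<beta> y z)"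
proof -
  show "(\<Sum>\<^sub>\<infinity>z. ennreal (\<alpha> x y * \<beta> y z / g y)) = ennreal (\<alpha> x y)"
  proof (cases "g y = 0")
    case True
    then have "\<alpha> x y = 0" using enn_term_le[of "\<lambda>x. \<alpha> x y" "g y" x] a0 am g0 by (simp add: order_antisym)
    then show ?thesis by simp
  next
    case False
    have "(\<Sum>\<^sub>\<infinity>z. ennreal (\<alpha> x y * \<beta> y z / g y)) = (\<Sum>\<^sub>\<infinity>z. ennreal (\<alpha> x y / g y) * ennreal (\<beta> y z))"
      by (intro infsum_cong) (simp add: b0 ennreal_mult''[symmetric])
    also have "\<dots> = ennreal (\<alpha> x y / g y) * ennreal (g y)"
      by (simp add: enn_infsum_cmult_left bm)
    also have "\<dots> = ennreal (\<alpha> x y)" using False g0[of y]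
      by (simp add: ennreal_mult''[symmetric])
    finally show ?thesis .
  qed
  show "(\<Sum>\<^sub>\<infinity>x. ennreal (\<alpha> x y * \<beta> y z / g y)) = ennreal (\<beta> y z)"
  proof (cases "g y = 0")
    case True
    then have "\<beta> y z = 0" using enn_term_le[of "\<lambda>z. \<beta> y z" "g y" z] b0 bm g0 by (simp add: order_antisym)
    then show ?thesis by simp
  next
    case False
    have "(\<Sum>\<^sub>\<infinity>x. ennreal (\<alpha> x y * \<beta> y z / g y)) = (\<Sum>\<^sub>\<infinity>x. ennreal (\<alpha> x y) * ennreal (\<beta> y z / g y))"
      by (intro infsum_cong) (simp add: b0 g0 ennreal_mult''[symmetric])
    also have "\<dots> = ennreal (g y) * ennreal (\<beta> y z / g y)"
      by (simp add: enn_infsum_cmult_right am)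
    also have "\<dots> = ennreal (\<beta> y z)" using False g0[of y] b0[of y z]
      by (simp add: ennreal_mult''[symmetric])
    finally show ?thesis .
  qed
qed



lemma coupling_nonneg: "coupling \<mu> \<nu> \<pi> \<Longrightarrow> 0 \<le> \<pi> p"
  by (cases p) (simp add: coupling_def)

lemma coupling_marg1_nonneg: "coupling \<mu> \<nu> \<pi> \<Longrightarrow> 0 \<le> \<mu> x"
  unfolding coupling_def by (meson has_sum_nonneg)

lemma coupling_marg2_nonneg: "coupling \<mu> \<nu> \<pi> \<Longrightarrow> 0 \<le> \<nu> x"
  unfolding coupling_def by (meson has_sum_nonneg)

lemma coupling_enn1: "coupling \<mu> \<nu> \<pi> \<Longrightarrow> (\<Sum>\<^sub>\<infinity>y. ennreal (\<pi> (x, y))) = ennreal (\<mu> x)"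
  unfolding coupling_def by (intro has_sum_enn) auto

lemma coupling_enn2: "coupling \<mu> \<nu> \<pi> \<Longrightarrow> (\<Sum>\<^sub>\<infinity>x. ennreal (\<pi> (x, y))) = ennreal (\<nu> y)"
  unfolding coupling_def by (intro has_sum_enn) auto

lemma tcost_iter:
  assumes "\<And>p. 0 \<le> \<pi> p"
  shows "tcost E \<pi> = (\<Sum>\<^sub>\<infinity>x. \<Sum>\<^sub>\<infinity>y. ennreal (real (gdist E x y)) * ennreal (\<pi> (x, y)))"
  unfolding tcost_def
  by (subst enn_infsum_pair) (simp add: assms ennreal_mult'')

lemma enn_has_sum_finite:
  fixes h :: "'a \<Rightarrow> real"
  assumes "finite B" "\<And>x. x \<notin> B \<Longrightarrow> h x = 0" "\<And>x. 0 \<le> h x"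
    "(\<Sum>\<^sub>\<infinity>x. ennreal (h x)) = ennreal s" "0 \<le> s"
  shows "(h has_sum s) UNIV"
proof (rule has_sum_finite_neutralI[OF assms(1)])
  have "(\<Sum>\<^sub>\<infinity>x. ennreal (h x)) = (\<Sum>\<^sub>\<infinity>x\<in>B. ennreal (h x))"
    by (rule infsum_cong_neutral) (use assms(2) in auto)
  also have "\<dots> = ennreal (sum h B)" using assms(1,3) by simp
  finally show "s = sum h B" using assms(3,4,5) by (simp add: sum_nonneg)
qed (use assms(2) in auto)

lemma W1_le_tcost: "coupling \<mu> \<nu> \<pi> \<Longrightarrow> W1 E \<mu> \<nu> \<le> tcost E \<pi>"
  unfolding W1_def by (rule INF_lower) simp



lemma sw2: "(\<Sum>\<^sub>\<infinity>w. \<Sum>\<^sub>\<infinity>x. \<Sum>\<^sub>\<infinity>y. (F w x y :: ennreal)) = (\<Sum>\<^sub>\<infinity>w. \<Sum>\<^sub>\<infinity>y. \<Sum>\<^sub>\<infinity>x. F w x y)"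
  by (intro infsum_cong enn_infsum_swap)
lemma sw3: "(\<Sum>\<^sub>\<infinity>w. \<Sum>\<^sub>\<infinity>v. \<Sum>\<^sub>\<infinity>x. \<Sum>\<^sub>\<infinity>y. (F w v x y :: ennreal)) = (\<Sum>\<^sub>\<infinity>w. \<Sum>\<^sub>\<infinity>v. \<Sum>\<^sub>\<infinity>y. \<Sum>\<^sub>\<infinity>x. F w v x y)"
  by (intro infsum_cong enn_infsum_swap)

lemma sum4: "(\<Sum>\<^sub>\<infinity>a. \<Sum>\<^sub>\<infinity>b. \<Sum>\<^sub>\<infinity>c. \<Sum>\<^sub>\<infinity>d. (F a b c d :: ennreal))
   = (\<Sum>\<^sub>\<infinity>z. F (fst z) (fst (snd z)) (fst (snd (snd z))) (snd (snd (snd z))))"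
proof -
  have "(\<Sum>\<^sub>\<infinity>z. F (fst z) (fst (snd z)) (fst (snd (snd z))) (snd (snd (snd z))))
      = (\<Sum>\<^sub>\<infinity>a. \<Sum>\<^sub>\<infinity>y. F a (fst y) (fst (snd y)) (snd (snd y)))"
    by (subst enn_infsum_pair) simp
  also have "\<dots> = (\<Sum>\<^sub>\<infinity>a. \<Sum>\<^sub>\<infinity>b. \<Sum>\<^sub>\<infinity>y. F a b (fst y) (snd y))"
    by (intro infsum_cong) (subst enn_infsum_pair, simp)
  also have "\<dots> = (\<Sum>\<^sub>\<infinity>a. \<Sum>\<^sub>\<infinity>b. \<Sum>\<^sub>\<infinity>c. \<Sum>\<^sub>\<infinity>d. F a b c d)"
    by (intro infsum_cong) (subst enn_infsum_pair, simp)
  finally show ?thesis by simp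
qed

lemma F4_add: "(\<Sum>\<^sub>\<infinity>a. \<Sum>\<^sub>\<infinity>b. \<Sum>\<^sub>\<infinity>c. \<Sum>\<^sub>\<infinity>d. (F a b c d + G a b c d :: ennreal))
  = (\<Sum>\<^sub>\<infinity>a. \<Sum>\<^sub>\<infinity>b. \<Sum>\<^sub>\<infinity>c. \<Sum>\<^sub>\<infinity>d. F a b c d) + (\<Sum>\<^sub>\<infinity>a. \<Sum>\<^sub>\<infinity>b. \<Sum>\<^sub>\<infinity>c. \<Sum>\<^sub>\<infinity>d. G a b c d)"
  unfolding sum4 by (rule enn_infsum_add)

lemma F4_mono: "(\<And>a b c d. (F a b c d :: ennreal) \<le> G a b c d) \<Longrightarrow>
  (\<Sum>\<^sub>\<infinity>a. \<Sum>\<^sub>\<infinity>b. \<Sum>\<^sub>\<infinity>c. \<Sum>\<^sub>\<infinity>d. F a b c d) \<le> (\<Sum>\<^sub>\<infinity>a. \<Sum>\<^sub>\<infinity>b. \<Sum>\<^sub>\<infinity>c. \<Sum>\<^sub>\<infinity>d. G a b c d)"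
  unfolding sum4 by (rule enn_infsum_mono) simp



lemma eps_step:
  fixes E :: "'a \<Rightarrow> 'a \<Rightarrow> bool" and f0 fs ft f1 :: "'a \<Rightarrow> real"
    and \<pi>1 \<pi>s \<pi>2 :: "'a \<times> 'a \<Rightarrow> real" and A B :: "'a set" and u0 v0 :: 'a and \<epsilon> :: real
  assumes conn: "connected_graph E"
    and c1: "coupling f0 fs \<pi>1" and cs: "coupling fs ft \<pi>s" and c2: "coupling ft f1 \<pi>2"
    and A: "finite A" "\<And>a. a \<notin> A \<Longrightarrow> f0 a = 0"
    and B: "finite B" "\<And>b. b \<notin> B \<Longrightarrow> f1 b = 0"
    and fin: "W1 E f0 f1 < \<infinity>"
    and tot: "tcost E \<pi>1 + tcost E \<pi>s + tcost E \<pi>2 \<le> W1 E f0 f1 + ennreal (2*\<epsilon>)"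
    and eps: "0 \<le> \<epsilon>"
  shows "\<exists>P. coupling f0 f1 P \<and> (\<forall>p. p \<notin> A \<times> B \<longrightarrow> P p = 0)
     \<and> tcost E P \<le> W1 E f0 f1 + ennreal (2*\<epsilon>)
     \<and> \<pi>s (u0,v0) - 2*\<epsilon> \<le> (\<Sum>p\<in>{p\<in>A\<times>B. gdist E (fst p) u0 + gdist E u0 v0 + gdist E v0 (snd p) = gdist E (fst p) (snd p)}. P p)"
proof -
  define S where "S = {p\<in>A\<times>B. gdist E (fst p) u0 + gdist E u0 v0 + gdist E v0 (snd p) = gdist E (fst p) (snd p)}"
  have finS: "finite S" unfolding S_def using A B by (auto intro: finite_subset)
  have p1nn: "\<And>p. 0 \<le> \<pi>1 p" using c1 by (rule coupling_nonneg)
  have psnn: "\<And>p. 0 \<le> \<pi>s p" using cs by (rule coupling_nonneg)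
  have p2nn: "\<And>p. 0 \<le> \<pi>2 p" using c2 by (rule coupling_nonneg)
  have fsnn: "\<And>u. 0 \<le> fs u" using c1 by (rule coupling_marg2_nonneg)
  have ftnn: "\<And>u. 0 \<le> ft u" using c2 by (rule coupling_marg1_nonneg)
  have f0nn: "\<And>u. 0 \<le> f0 u" using c1 by (rule coupling_marg1_nonneg)
  have f1nn: "\<And>u. 0 \<le> f1 u" using c2 by (rule coupling_marg2_nonneg)
  define Q3 where "Q3 a u v = \<pi>1 (a,u) * \<pi>s (u,v) / fs u" for a u v
  define Q4 where "Q4 a u v b = Q3 a u v * \<pi>2 (v,b) / ft v" for a u v b
  define T where "T a u v b = ennreal (Q4 a u v b)" for a u v b
  have Q3nn: "0 \<le> Q3 a u v" for a u v unfolding Q3_def using p1nn psnn fsnn by simp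
  have G1: "(\<Sum>\<^sub>\<infinity>v. ennreal (Q3 a u v)) = ennreal (\<pi>1 (a,u))" for a u
    unfolding Q3_def
    by (rule glue1[of "\<lambda>a u. \<pi>1 (a,u)" "\<lambda>u v. \<pi>s (u,v)" fs])
       (use p1nn psnn fsnn coupling_enn2[OF c1] coupling_enn1[OF cs] in auto)
  have G2: "(\<Sum>\<^sub>\<infinity>a. ennreal (Q3 a u v)) = ennreal (\<pi>s (u,v))" for u v
    unfolding Q3_def
    by (rule glue2[of "\<lambda>a u. \<pi>1 (a,u)" "\<lambda>u v. \<pi>s (u,v)" fs])
       (use p1nn psnn fsnn coupling_enn2[OF c1] coupling_enn1[OF cs] in auto)
  have F3: "(\<Sum>\<^sub>\<infinity>p. ennreal (Q3 (fst p) (snd p) v)) = ennreal (ft v)" for v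
  proof -
    have "(\<Sum>\<^sub>\<infinity>p. ennreal (Q3 (fst p) (snd p) v)) = (\<Sum>\<^sub>\<infinity>a. \<Sum>\<^sub>\<infinity>u. ennreal (Q3 a u v))"
      by (subst enn_infsum_pair) simp
    also have "\<dots> = (\<Sum>\<^sub>\<infinity>u. \<Sum>\<^sub>\<infinity>a. ennreal (Q3 a u v))" by (rule enn_infsum_swap)
    also have "\<dots> = ennreal (ft v)" by (simp add: G2 coupling_enn2[OF cs])
    finally show ?thesis .
  qed
  have G3: "(\<Sum>\<^sub>\<infinity>b. T a u v b) = ennreal (Q3 a u v)" for a u v
    using glue1[of "\<lambda>p v. Q3 (fst p) (snd p) v" "\<lambda>v b. \<pi>2 (v,b)" ft "(a,u)" v]
    using Q3nn p2nn ftnn F3 coupling_enn1[OF c2] by (auto simp: T_def Q4_def)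
  have G4: "(\<Sum>\<^sub>\<infinity>a. \<Sum>\<^sub>\<infinity>u. T a u v b) = ennreal (\<pi>2 (v,b))" for v b
  proof -
    have "(\<Sum>\<^sub>\<infinity>p. T (fst p) (snd p) v b) = ennreal (\<pi>2 (v,b))"
      using glue2[of "\<lambda>p v. Q3 (fst p) (snd p) v" "\<lambda>v b. \<pi>2 (v,b)" ft v b]
      using Q3nn p2nn ftnn F3 coupling_enn1[OF c2] by (auto simp: T_def Q4_def)
    then show ?thesis by (subst (asm) enn_infsum_pair) simp
  qed

  have T0A: "T a u v b = 0" if "a \<notin> A" for a u v b
  proof -
    have "\<pi>1 (a,u) \<le> f0 a"
      by (rule enn_term_le[of "\<lambda>u. \<pi>1 (a,u)"]) (use p1nn coupling_enn1[OF c1] f0nn in auto)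
    then have "\<pi>1 (a,u) = 0" using A(2)[OF that] p1nn[of "(a,u)"] by simp
    then show ?thesis by (simp add: T_def Q4_def Q3_def)
  qed
  have T0B: "T a u v b = 0" if "b \<notin> B" for a u v b
  proof -
    have "\<pi>2 (v,b) \<le> f1 b"
      by (rule enn_term_le[of "\<lambda>v. \<pi>2 (v,b)"]) (use p2nn coupling_enn2[OF c2] f1nn in auto)
    then have "\<pi>2 (v,b) = 0" using B(2)[OF that] p2nn[of "(v,b)"] by simp
    then show ?thesis by (simp add: T_def Q4_def)
  qed
  define Pe where "Pe a b = (\<Sum>\<^sub>\<infinity>u. \<Sum>\<^sub>\<infinity>v. T a u v b)" for a b
  have M1: "(\<Sum>\<^sub>\<infinity>b. Pe a b) = ennreal (f0 a)" for a
  proof -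
    have "(\<Sum>\<^sub>\<infinity>b. Pe a b) = (\<Sum>\<^sub>\<infinity>b. \<Sum>\<^sub>\<infinity>u. \<Sum>\<^sub>\<infinity>v. T a u v b)" by (simp add: Pe_def)
    also have "\<dots> = (\<Sum>\<^sub>\<infinity>u. \<Sum>\<^sub>\<infinity>b. \<Sum>\<^sub>\<infinity>v. T a u v b)" by (rule enn_infsum_swap)
    also have "\<dots> = (\<Sum>\<^sub>\<infinity>u. \<Sum>\<^sub>\<infinity>v. \<Sum>\<^sub>\<infinity>b. T a u v b)" by (rule sw2)
    also have "\<dots> = ennreal (f0 a)" by (simp add: G3 G1 coupling_enn1[OF c1])
    finally show ?thesis .
  qed
  have M2: "(\<Sum>\<^sub>\<infinity>a. Pe a b) = ennreal (f1 b)" for b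
  proof -
    have "(\<Sum>\<^sub>\<infinity>a. Pe a b) = (\<Sum>\<^sub>\<infinity>a. \<Sum>\<^sub>\<infinity>u. \<Sum>\<^sub>\<infinity>v. T a u v b)" by (simp add: Pe_def)
    also have "\<dots> = (\<Sum>\<^sub>\<infinity>a. \<Sum>\<^sub>\<infinity>v. \<Sum>\<^sub>\<infinity>u. T a u v b)" by (rule sw2)
    also have "\<dots> = (\<Sum>\<^sub>\<infinity>v. \<Sum>\<^sub>\<infinity>a. \<Sum>\<^sub>\<infinity>u. T a u v b)" by (rule enn_infsum_swap)
    also have "\<dots> = ennreal (f1 b)" by (simp add: G4 coupling_enn2[OF c2])
    finally show ?thesis .
  qed
  have Pe0: "Pe a b = 0" if "(a,b) \<notin> A \<times> B" for a b
    using that T0A T0B by (auto simp: Pe_def)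
  have Pefin: "Pe a b < top" for a b
  proof -
    have "Pe a b \<le> ennreal (f0 a)" using enn_le_infsum[of b UNIV "Pe a"] M1[of a] by simp
    then show ?thesis using le_less_trans by fastforce
  qed
  define P where "P p = enn2real (Pe (fst p) (snd p))" for p
  have PeP: "Pe a b = ennreal (P (a,b))" for a b by (simp add: P_def Pefin)
  have Pnn: "0 \<le> P p" for p by (simp add: P_def)
  have P0: "\<forall>p. p \<notin> A \<times> B \<longrightarrow> P p = 0" using Pe0 by (auto simp: P_def)
  have cP: "coupling f0 f1 P"
    unfolding coupling_def
  proof (intro conjI allI)
    show "0 \<le> P p" for p by (rule Pnn)
    show "((\<lambda>b. P (a, b)) has_sum f0 a) UNIV" for a
      by (rule enn_has_sum_finite[OF B(1)]) (use P0 Pnn M1 PeP f0nn in auto)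
    show "((\<lambda>a. P (a, b)) has_sum f1 b) UNIV" for b
      by (rule enn_has_sum_finite[OF A(1)]) (use P0 Pnn M2 PeP f1nn in auto)
  qed

  define D where "D x y = ennreal (real (gdist E x y))" for x y
  define bad where "bad a u v b = (gdist E a u + gdist E u v + gdist E v b \<noteq> gdist E a b)" for a u v b
  have costP: "tcost E P = (\<Sum>\<^sub>\<infinity>a. \<Sum>\<^sub>\<infinity>b. \<Sum>\<^sub>\<infinity>u. \<Sum>\<^sub>\<infinity>v. D a b * T a u v b)"
  proof -
    have "tcost E P = (\<Sum>\<^sub>\<infinity>a. \<Sum>\<^sub>\<infinity>b. D a b * Pe a b)"
      by (simp add: tcost_iter[OF Pnn] PeP D_def)
    also have "\<dots> = (\<Sum>\<^sub>\<infinity>a. \<Sum>\<^sub>\<infinity>b. \<Sum>\<^sub>\<infinity>u. \<Sum>\<^sub>\<infinity>v. D a b * T a u v b)"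
      by (simp add: Pe_def enn_infsum_cmult_left)
    finally show ?thesis .
  qed
  have pw: "D a b * T a u v b + (if bad a u v b then T a u v b else 0)
       \<le> D a u * T a u v b + D u v * T a u v b + D v b * T a u v b" for a u v b
  proof -
    have t1: "gdist E a b \<le> gdist E a u + gdist E u b" by (rule gdist_triangle[OF conn])
    have t2: "gdist E u b \<le> gdist E u v + gdist E v b" by (rule gdist_triangle[OF conn])
    have nat: "gdist E a b + (if bad a u v b then 1 else 0) \<le> gdist E a u + gdist E u v + gdist E v b"
      using t1 t2 by (auto simp: bad_def)
    have "D a b + (if bad a u v b then 1 else 0) = ennreal (real (gdist E a b + (if bad a u v b then 1 else 0)))"
      by (simp add: D_def)
    also have "\<dots> \<le> ennreal (real (gdist E a u + gdist E u v + gdist E v b))"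
      using nat by (intro ennreal_leI) simp
    also have "\<dots> = D a u + D u v + D v b" by (simp add: D_def ennreal_plus[symmetric] del: ennreal_plus)
    finally have "(D a b + (if bad a u v b then 1 else 0)) * T a u v b \<le> (D a u + D u v + D v b) * T a u v b"
      by (rule mult_right_mono) simp
    then show ?thesis by (simp add: distrib_right split: if_splits)
  qed
  have C1: "(\<Sum>\<^sub>\<infinity>a. \<Sum>\<^sub>\<infinity>b. \<Sum>\<^sub>\<infinity>u. \<Sum>\<^sub>\<infinity>v. D a u * T a u v b) = tcost E \<pi>1"
  proof -
    have "(\<Sum>\<^sub>\<infinity>a. \<Sum>\<^sub>\<infinity>b. \<Sum>\<^sub>\<infinity>u. \<Sum>\<^sub>\<infinity>v. D a u * T a u v b) = (\<Sum>\<^sub>\<infinity>a. \<Sum>\<^sub>\<infinity>u. \<Sum>\<^sub>\<infinity>b. \<Sum>\<^sub>\<infinity>v. D a u * T a u v b)"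
      by (rule sw2)
    also have "\<dots> = (\<Sum>\<^sub>\<infinity>a. \<Sum>\<^sub>\<infinity>u. \<Sum>\<^sub>\<infinity>v. \<Sum>\<^sub>\<infinity>b. D a u * T a u v b)"
      by (rule sw3)
    also have "\<dots> = (\<Sum>\<^sub>\<infinity>a. \<Sum>\<^sub>\<infinity>u. D a u * ennreal (\<pi>1 (a,u)))"
      by (simp add: enn_infsum_cmult_left G3 G1)
    also have "\<dots> = tcost E \<pi>1" by (simp add: tcost_iter[OF p1nn] D_def)
    finally show ?thesis .
  qed
  have C2: "(\<Sum>\<^sub>\<infinity>a. \<Sum>\<^sub>\<infinity>b. \<Sum>\<^sub>\<infinity>u. \<Sum>\<^sub>\<infinity>v. D u v * T a u v b) = tcost E \<pi>s"
  proof -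
    have "(\<Sum>\<^sub>\<infinity>a. \<Sum>\<^sub>\<infinity>b. \<Sum>\<^sub>\<infinity>u. \<Sum>\<^sub>\<infinity>v. D u v * T a u v b) = (\<Sum>\<^sub>\<infinity>a. \<Sum>\<^sub>\<infinity>u. \<Sum>\<^sub>\<infinity>b. \<Sum>\<^sub>\<infinity>v. D u v * T a u v b)"
      by (rule sw2)
    also have "\<dots> = (\<Sum>\<^sub>\<infinity>a. \<Sum>\<^sub>\<infinity>u. \<Sum>\<^sub>\<infinity>v. \<Sum>\<^sub>\<infinity>b. D u v * T a u v b)"
      by (rule sw3)
    also have "\<dots> = (\<Sum>\<^sub>\<infinity>u. \<Sum>\<^sub>\<infinity>a. \<Sum>\<^sub>\<infinity>v. \<Sum>\<^sub>\<infinity>b. D u v * T a u v b)"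
      by (rule enn_infsum_swap)
    also have "\<dots> = (\<Sum>\<^sub>\<infinity>u. \<Sum>\<^sub>\<infinity>v. \<Sum>\<^sub>\<infinity>a. \<Sum>\<^sub>\<infinity>b. D u v * T a u v b)"
      by (rule sw2)
    also have "\<dots> = (\<Sum>\<^sub>\<infinity>u. \<Sum>\<^sub>\<infinity>v. D u v * ennreal (\<pi>s (u,v)))"
      by (simp add: enn_infsum_cmult_left G3 G2)
    also have "\<dots> = tcost E \<pi>s" by (simp add: tcost_iter[OF psnn] D_def)
    finally show ?thesis .
  qed
  have C3: "(\<Sum>\<^sub>\<infinity>a. \<Sum>\<^sub>\<infinity>b. \<Sum>\<^sub>\<infinity>u. \<Sum>\<^sub>\<infinity>v. D v b * T a u v b) = tcost E \<pi>2"
  proof -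
    have "(\<Sum>\<^sub>\<infinity>a. \<Sum>\<^sub>\<infinity>b. \<Sum>\<^sub>\<infinity>u. \<Sum>\<^sub>\<infinity>v. D v b * T a u v b) = (\<Sum>\<^sub>\<infinity>a. \<Sum>\<^sub>\<infinity>b. \<Sum>\<^sub>\<infinity>v. \<Sum>\<^sub>\<infinity>u. D v b * T a u v b)"
      by (rule sw3)
    also have "\<dots> = (\<Sum>\<^sub>\<infinity>a. \<Sum>\<^sub>\<infinity>v. \<Sum>\<^sub>\<infinity>b. \<Sum>\<^sub>\<infinity>u. D v b * T a u v b)"
      by (rule sw2)
    also have "\<dots> = (\<Sum>\<^sub>\<infinity>v. \<Sum>\<^sub>\<infinity>a. \<Sum>\<^sub>\<infinity>b. \<Sum>\<^sub>\<infinity>u. D v b * T a u v b)"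
      by (rule enn_infsum_swap)
    also have "\<dots> = (\<Sum>\<^sub>\<infinity>v. \<Sum>\<^sub>\<infinity>b. \<Sum>\<^sub>\<infinity>a. \<Sum>\<^sub>\<infinity>u. D v b * T a u v b)"
      by (rule sw2)
    also have "\<dots> = (\<Sum>\<^sub>\<infinity>v. \<Sum>\<^sub>\<infinity>b. D v b * ennreal (\<pi>2 (v,b)))"
      by (simp add: enn_infsum_cmult_left G4)
    also have "\<dots> = tcost E \<pi>2" by (simp add: tcost_iter[OF p2nn] D_def)
    finally show ?thesis .
  qed
  define Bd where "Bd = (\<Sum>\<^sub>\<infinity>p. if bad (fst p) u0 v0 (snd p) then T (fst p) u0 v0 (snd p) else 0)"
  define Gd where "Gd = (\<Sum>\<^sub>\<infinity>p. if bad (fst p) u0 v0 (snd p) then 0 else T (fst p) u0 v0 (snd p))"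
  have BdF: "Bd \<le> (\<Sum>\<^sub>\<infinity>a. \<Sum>\<^sub>\<infinity>b. \<Sum>\<^sub>\<infinity>u. \<Sum>\<^sub>\<infinity>v. if bad a u v b then T a u v b else 0)"
  proof -
    have "Bd = (\<Sum>\<^sub>\<infinity>a. \<Sum>\<^sub>\<infinity>b. if bad a u0 v0 b then T a u0 v0 b else 0)"
      unfolding Bd_def by (subst enn_infsum_pair) (simp only: fst_conv snd_conv)
    also have "\<dots> \<le> (\<Sum>\<^sub>\<infinity>a. \<Sum>\<^sub>\<infinity>b. \<Sum>\<^sub>\<infinity>u. \<Sum>\<^sub>\<infinity>v. if bad a u v b then T a u v b else 0)"
    proof (intro enn_infsum_mono)
      fix a b
      have "(if bad a u0 v0 b then T a u0 v0 b else 0) \<le> (\<Sum>\<^sub>\<infinity>v. if bad a u0 v b then T a u0 v b else 0)"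
        by (rule enn_le_infsum[of v0 UNIV "\<lambda>v. if bad a u0 v b then T a u0 v b else 0", simplified])
      also have "\<dots> \<le> (\<Sum>\<^sub>\<infinity>u. \<Sum>\<^sub>\<infinity>v. if bad a u v b then T a u v b else 0)"
        by (rule enn_le_infsum[of u0 UNIV "\<lambda>u. \<Sum>\<^sub>\<infinity>v. if bad a u v b then T a u v b else 0", simplified])
      finally show "(if bad a u0 v0 b then T a u0 v0 b else 0) \<le> (\<Sum>\<^sub>\<infinity>u. \<Sum>\<^sub>\<infinity>v. if bad a u v b then T a u v b else 0)" .
    qed
    finally show ?thesis .
  qed
  have main: "tcost E P + Bd \<le> tcost E \<pi>1 + tcost E \<pi>s + tcost E \<pi>2"
  proof -
    have "tcost E P + Bd \<le> (\<Sum>\<^sub>\<infinity>a. \<Sum>\<^sub>\<infinity>b. \<Sum>\<^sub>\<infinity>u. \<Sum>\<^sub>\<infinity>v. D a b * T a u v b)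
         + (\<Sum>\<^sub>\<infinity>a. \<Sum>\<^sub>\<infinity>b. \<Sum>\<^sub>\<infinity>u. \<Sum>\<^sub>\<infinity>v. if bad a u v b then T a u v b else 0)"
      unfolding costP using BdF by (rule add_left_mono)
    also have "\<dots> = (\<Sum>\<^sub>\<infinity>a. \<Sum>\<^sub>\<infinity>b. \<Sum>\<^sub>\<infinity>u. \<Sum>\<^sub>\<infinity>v. D a b * T a u v b + (if bad a u v b then T a u v b else 0))"
      by (rule F4_add[symmetric])
    also have "\<dots> \<le> (\<Sum>\<^sub>\<infinity>a. \<Sum>\<^sub>\<infinity>b. \<Sum>\<^sub>\<infinity>u. \<Sum>\<^sub>\<infinity>v. (D a u * T a u v b + D u v * T a u v b) + D v b * T a u v b)"
      by (rule F4_mono) (rule pw)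
    also have "\<dots> = tcost E \<pi>1 + tcost E \<pi>s + tcost E \<pi>2"
      by (simp only: F4_add C1 C2 C3)
    finally show ?thesis .
  qed

  have WP: "W1 E f0 f1 \<le> tcost E P" by (rule W1_le_tcost[OF cP])
  have tot2: "tcost E P + Bd \<le> W1 E f0 f1 + ennreal (2*\<epsilon>)" using main tot by (rule order_trans)
  have "W1 E f0 f1 + Bd \<le> W1 E f0 f1 + ennreal (2*\<epsilon>)"
    using add_right_mono[OF WP, of Bd] tot2 by (rule order_trans)
  then have Bd2: "Bd \<le> ennreal (2*\<epsilon>)" using fin by (auto simp: ennreal_add_left_cancel_le)
  have costle: "tcost E P \<le> W1 E f0 f1 + ennreal (2*\<epsilon>)"
    using tot2 by (rule order_trans[rotated]) simp
  have GB: "Gd + Bd = ennreal (\<pi>s (u0,v0))"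
  proof -
    have "Gd + Bd = (\<Sum>\<^sub>\<infinity>p. T (fst p) u0 v0 (snd p))"
      unfolding Gd_def Bd_def by (subst enn_infsum_add[symmetric]) (intro infsum_cong, simp)
    also have "\<dots> = (\<Sum>\<^sub>\<infinity>a. \<Sum>\<^sub>\<infinity>b. T a u0 v0 b)" by (subst enn_infsum_pair) simp
    also have "\<dots> = ennreal (\<pi>s (u0,v0))" by (simp add: G3 G2)
    finally show ?thesis .
  qed
  have GdS: "Gd = (\<Sum>p\<in>S. T (fst p) u0 v0 (snd p))"
  proof -
    have "Gd = (\<Sum>\<^sub>\<infinity>p\<in>S. T (fst p) u0 v0 (snd p))"
      unfolding Gd_def
    proof (rule infsum_cong_neutral)
      fix p assume "p \<in> UNIV - S"
      then show "(if bad (fst p) u0 v0 (snd p) then 0 else T (fst p) u0 v0 (snd p)) = 0"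
        using T0A T0B by (cases p) (auto simp: S_def bad_def)
    next
      fix p assume "p \<in> UNIV \<inter> S"
      then show "(if bad (fst p) u0 v0 (snd p) then 0 else T (fst p) u0 v0 (snd p)) = T (fst p) u0 v0 (snd p)"
        by (auto simp: S_def bad_def)
    qed simp
    then show ?thesis using finS by simp
  qed
  have "Gd \<le> (\<Sum>p\<in>S. Pe (fst p) (snd p))"
    unfolding GdS
  proof (rule sum_mono)
    fix p
    have "T (fst p) u0 v0 (snd p) \<le> (\<Sum>\<^sub>\<infinity>v. T (fst p) u0 v (snd p))"
      by (rule enn_le_infsum[of v0 UNIV "\<lambda>v. T (fst p) u0 v (snd p)", simplified])
    also have "\<dots> \<le> Pe (fst p) (snd p)" unfolding Pe_def
      by (rule enn_le_infsum[of u0 UNIV "\<lambda>u. \<Sum>\<^sub>\<infinity>v. T (fst p) u v (snd p)", simplified])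
    finally show "T (fst p) u0 v0 (snd p) \<le> Pe (fst p) (snd p)" .
  qed
  also have "\<dots> = ennreal (\<Sum>p\<in>S. P p)" by (simp add: PeP Pnn)
  finally have Gd2: "Gd \<le> ennreal (\<Sum>p\<in>S. P p)" .
  have "ennreal (\<pi>s (u0,v0)) \<le> ennreal (\<Sum>p\<in>S. P p) + ennreal (2*\<epsilon>)"
    unfolding GB[symmetric] using Gd2 Bd2 by (rule add_mono)
  also have "\<dots> = ennreal ((\<Sum>p\<in>S. P p) + 2*\<epsilon>)" using eps Pnn by (simp add: sum_nonneg)
  moreover have "0 \<le> (\<Sum>p\<in>S. P p) + 2*\<epsilon>"
    using eps Pnn by (simp add: sum_nonneg)
  ultimately have "\<pi>s (u0,v0) \<le> (\<Sum>p\<in>S. P p) + 2*\<epsilon>"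
    by simp
  then show ?thesis using cP P0 costle unfolding S_def by (intro exI[of _ P]) auto
qed


lemma finite_subseq:
  fixes X :: "nat \<Rightarrow> 'b \<Rightarrow> real"
  assumes "finite K" "\<And>j p. p \<in> K \<Longrightarrow> X j p \<in> {-C..C}"
  shows "\<exists>r L. strict_mono r \<and> (\<forall>p\<in>K. (\<lambda>j. X (r j) p) \<longlonglongrightarrow> L p)"
  using assms
proof (induction K rule: finite_induct)
  case empty
  show ?case by (rule exI[of _ id]) (auto simp: strict_mono_def)
next
  case (insert q K)
  then obtain r L where r: "strict_mono r" "\<forall>p\<in>K. (\<lambda>j. X (r j) p) \<longlonglongrightarrow> L p" by auto
  have sc: "seq_compact {-C..C}" by (rule compact_imp_seq_compact) simp
  have "\<forall>j. X (r j) q \<in> {-C..C}" using insert.prems by auto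
  from seq_compactE[OF sc this] obtain l r' where r': "strict_mono r'" "((\<lambda>j. X (r j) q) \<circ> r') \<longlonglongrightarrow> l"
    by blast
  define L' where "L' p = (if p = q then l else L p)" for p
  have "\<forall>p\<in>insert q K. (\<lambda>j. X ((r \<circ> r') j) p) \<longlonglongrightarrow> L' p"
  proof
    fix p assume p: "p \<in> insert q K"
    show "(\<lambda>j. X ((r \<circ> r') j) p) \<longlonglongrightarrow> L' p"
    proof (cases "p = q")
      case True
      then show ?thesis using r'(2) by (simp add: L'_def o_def)
    next
      case False
      then have "p \<in> K" using p by auto
      then have "((\<lambda>j. X (r j) p) \<circ> r') \<longlonglongrightarrow> L p" using r(2) LIMSEQ_subseq_LIMSEQ r'(1) by blast
      then show ?thesis using False by (simp add: L'_def o_def)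
    qed
  qed
  moreover have "strict_mono (r \<circ> r')" using r(1) r'(1) by (rule strict_mono_o)
  ultimately show ?case by blast
qed

lemma tcost_finite_supp:
  assumes "finite K" "\<And>p. p \<notin> K \<Longrightarrow> Q p = 0" "\<And>p. 0 \<le> Q p"
  shows "tcost E Q = ennreal (\<Sum>p\<in>K. real (gdist E (fst p) (snd p)) * Q p)"
proof -
  have "tcost E Q = (\<Sum>\<^sub>\<infinity>p\<in>K. ennreal (real (gdist E (fst p) (snd p)) * Q p))"
    unfolding tcost_def by (rule infsum_cong_neutral) (use assms(2) in auto)
  also have "\<dots> = ennreal (\<Sum>p\<in>K. real (gdist E (fst p) (snd p)) * Q p)"
    using assms(1,3) by simp
  finally show ?thesis .
qed

lemma coupling_sum_finite1:
  assumes "coupling \<mu> \<nu> P" "finite B" "\<And>a b. b \<notin> B \<Longrightarrow> P (a,b) = 0"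
  shows "(\<Sum>b\<in>B. P (a,b)) = \<mu> a"
proof -
  have "((\<lambda>b. P (a,b)) has_sum \<mu> a) UNIV" using assms(1) by (simp add: coupling_def)
  then have "((\<lambda>b. P (a,b)) has_sum \<mu> a) B"
    by (subst has_sum_cong_neutral[where T=UNIV]) (use assms(3) in auto)
  then show ?thesis using assms(2) by (simp add: has_sum_finite_iff)
qed

lemma coupling_sum_finite2:
  assumes "coupling \<mu> \<nu> P" "finite A" "\<And>a b. a \<notin> A \<Longrightarrow> P (a,b) = 0"
  shows "(\<Sum>a\<in>A. P (a,b)) = \<nu> b"
proof -
  have "((\<lambda>a. P (a,b)) has_sum \<nu> b) UNIV" using assms(1) by (simp add: coupling_def)
  then have "((\<lambda>a. P (a,b)) has_sum \<nu> b) A"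
    by (subst has_sum_cong_neutral[where T=UNIV]) (use assms(3) in auto)
  then show ?thesis using assms(2) by (simp add: has_sum_finite_iff)
qed



lemma inv_suble: "strict_mono r \<Longrightarrow> inverse (real (Suc (r j))) \<le> inverse (real (Suc j))"
  using seq_suble[of r j] by (intro le_imp_inverse_le) auto

lemma limit_step:
  fixes E :: "'a \<Rightarrow> 'a \<Rightarrow> bool" and f0 f1 :: "'a \<Rightarrow> real" and A B S :: "_ set" and m w :: real
  assumes A: "finite A" and B: "finite B" and S: "S \<subseteq> A \<times> B" and m: "0 < m"
    and W: "W1 E f0 f1 = ennreal w" "0 \<le> w"
    and H: "\<And>j::nat. \<exists>P. coupling f0 f1 P \<and> (\<forall>p. p \<notin> A \<times> B \<longrightarrow> P p = 0)
        \<and> tcost E P \<le> W1 E f0 f1 + ennreal (2 * inverse (real (Suc j)))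
        \<and> m - 2 * inverse (real (Suc j)) \<le> (\<Sum>p\<in>S. P p)"
  shows "\<exists>L\<in>Pi1 E f0 f1. \<exists>p\<in>S. 0 < L p"
proof -
  have "\<forall>j. \<exists>P. coupling f0 f1 P \<and> (\<forall>p. p \<notin> A \<times> B \<longrightarrow> P p = 0)
        \<and> tcost E P \<le> W1 E f0 f1 + ennreal (2 * inverse (real (Suc j)))
        \<and> m - 2 * inverse (real (Suc j)) \<le> (\<Sum>p\<in>S. P p)" using H by blast
  then obtain P where HP: "\<And>j. coupling f0 f1 (P j) \<and> (\<forall>p. p \<notin> A \<times> B \<longrightarrow> P j p = 0)
        \<and> tcost E (P j) \<le> W1 E f0 f1 + ennreal (2 * inverse (real (Suc j)))
        \<and> m - 2 * inverse (real (Suc j)) \<le> (\<Sum>p\<in>S. P j p)" by metis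
  define K where "K = A \<times> B"
  have finK: "finite K" using A B by (simp add: K_def)
  have finS: "finite S" using S finK unfolding K_def by (rule finite_subset)
  have cp: "coupling f0 f1 (P j)" for j using HP by blast
  have z: "P j p = 0" if "p \<notin> K" for j p using HP[of j] that unfolding K_def by blast
  have z2: "P j (a,b) = 0" if "b \<notin> B" for j a b using z that by (auto simp: K_def)
  have z1: "P j (a,b) = 0" if "a \<notin> A" for j a b using z that by (auto simp: K_def)
  have Pnn: "0 \<le> P j p" for j p using cp by (rule coupling_nonneg)
  have f0nn: "0 \<le> f0 a" for a using cp by (rule coupling_marg1_nonneg)
  define C where "C = (\<Sum>a\<in>A. f0 a)"
  have bnd: "P j p \<in> {-C..C}" if pK: "p \<in> K" for j p
  proof -
    obtain a b where p: "p = (a,b)" "a \<in> A" "b \<in> B" using pK by (auto simp: K_def)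
    have "P j (a,b) \<le> (\<Sum>b\<in>B. P j (a,b))" using B p Pnn by (intro member_le_sum) auto
    also have "\<dots> = f0 a" using coupling_sum_finite1[OF cp B z2] .
    also have "\<dots> \<le> C" unfolding C_def using A p f0nn by (intro member_le_sum) auto
    finally show ?thesis using Pnn[of j p] p by auto
  qed
  obtain r L0 where r: "strict_mono r" "\<forall>p\<in>K. (\<lambda>j. P (r j) p) \<longlonglongrightarrow> L0 p"
    using finite_subseq[of K P C, OF finK bnd] by blast
  define L where "L p = (if p \<in> K then L0 p else 0)" for p
  have conv: "(\<lambda>j. P (r j) p) \<longlonglongrightarrow> L p" for p
    using r(2) z by (cases "p \<in> K") (auto simp: L_def)
  have Lnn: "0 \<le> L p" for p by (rule LIMSEQ_le_const[OF conv]) (use Pnn in auto)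
  have Lz: "L p = 0" if "p \<notin> K" for p using that by (simp add: L_def)
  have cL: "coupling f0 f1 L"
    unfolding coupling_def
  proof (intro conjI allI)
    show "0 \<le> L p" for p by (rule Lnn)
    show "((\<lambda>b. L (a, b)) has_sum f0 a) UNIV" for a
    proof (rule has_sum_finite_neutralI[OF B])
      show "\<And>x. x \<in> UNIV - B \<Longrightarrow> L (a, x) = 0" using Lz by (auto simp: K_def)
      have "(\<lambda>j. \<Sum>b\<in>B. P (r j) (a,b)) \<longlonglongrightarrow> (\<Sum>b\<in>B. L (a,b))"
        by (intro tendsto_sum conv)
      moreover have "(\<lambda>j. \<Sum>b\<in>B. P (r j) (a,b)) = (\<lambda>j. f0 a)"
        using coupling_sum_finite1[OF cp B z2] by simp
      ultimately show "f0 a = (\<Sum>b\<in>B. L (a,b))" using LIMSEQ_unique tendsto_const by metis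
    qed simp
    show "((\<lambda>a. L (a, b)) has_sum f1 b) UNIV" for b
    proof (rule has_sum_finite_neutralI[OF A])
      show "\<And>x. x \<in> UNIV - A \<Longrightarrow> L (x, b) = 0" using Lz by (auto simp: K_def)
      have "(\<lambda>j. \<Sum>a\<in>A. P (r j) (a,b)) \<longlonglongrightarrow> (\<Sum>a\<in>A. L (a,b))"
        by (intro tendsto_sum conv)
      moreover have "(\<lambda>j. \<Sum>a\<in>A. P (r j) (a,b)) = (\<lambda>j. f1 b)"
        using coupling_sum_finite2[OF cp A z1] by simp
      ultimately show "f1 b = (\<Sum>a\<in>A. L (a,b))" using LIMSEQ_unique tendsto_const by metis
    qed simp
  qed
  define c where "c j = (\<Sum>p\<in>K. real (gdist E (fst p) (snd p)) * P j p)" for j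
  have cle: "c (r j) \<le> w + 2 * inverse (real (Suc j))" for j
  proof -
    have "ennreal (c (r j)) = tcost E (P (r j))"
      unfolding c_def by (rule tcost_finite_supp[symmetric, OF finK z Pnn])
    also have "\<dots> \<le> ennreal w + ennreal (2 * inverse (real (Suc (r j))))" using HP W by metis
    also have "\<dots> = ennreal (w + 2 * inverse (real (Suc (r j))))" using W(2) by simp
    finally have e: "ennreal (c (r j)) \<le> ennreal (w + 2 * inverse (real (Suc (r j))))" .
    have "0 \<le> w + 2 * inverse (real (Suc (r j)))" using W(2) by simp
    then have "c (r j) \<le> w + 2 * inverse (real (Suc (r j)))" using e by (simp only: ennreal_le_iff)
    also have "\<dots> \<le> w + 2 * inverse (real (Suc j))" using inv_suble[OF r(1), of j] by simp
    finally show ?thesis .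
  qed
  have lim0: "(\<lambda>j. w + 2 * inverse (real (Suc j))) \<longlonglongrightarrow> w + 2 * 0"
    by (intro tendsto_intros LIMSEQ_inverse_real_of_nat)
  have climit: "(\<lambda>j. c (r j)) \<longlonglongrightarrow> (\<Sum>p\<in>K. real (gdist E (fst p) (snd p)) * L p)"
    unfolding c_def by (intro tendsto_sum tendsto_mult_left conv)
  have "(\<Sum>p\<in>K. real (gdist E (fst p) (snd p)) * L p) \<le> w + 2 * 0"
    by (rule LIMSEQ_le[OF climit lim0]) (use cle in auto)
  then have "tcost E L \<le> W1 E f0 f1"
    using tcost_finite_supp[OF finK Lz Lnn, where E=E] W by simp
  then have "L \<in> Pi1 E f0 f1"
    using W1_le_tcost[OF cL, where E=E] cL by (auto simp: Pi1_def)
  moreover have "\<exists>p\<in>S. 0 < L p"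
  proof (rule ccontr)
    assume "\<not> ?thesis"
    then have "(\<Sum>p\<in>S. L p) \<le> 0" by (intro sum_nonpos) auto
    moreover have "m - 2 * 0 \<le> (\<Sum>p\<in>S. L p)"
    proof (rule LIMSEQ_le)
      show "(\<lambda>j. m - 2 * inverse (real (Suc j))) \<longlonglongrightarrow> m - 2 * 0"
        by (intro tendsto_intros LIMSEQ_inverse_real_of_nat)
      show "(\<lambda>j. \<Sum>p\<in>S. P (r j) p) \<longlonglongrightarrow> (\<Sum>p\<in>S. L p)" by (intro tendsto_sum conv)
      have "m - 2 * inverse (real (Suc j)) \<le> (\<Sum>p\<in>S. P (r j) p)" for j
      proof -
        have "m - 2 * inverse (real (Suc j)) \<le> m - 2 * inverse (real (Suc (r j)))"
          using inv_suble[OF r(1), of j] by simp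
        also have "\<dots> \<le> (\<Sum>p\<in>S. P (r j) p)" using HP by blast
        finally show ?thesis .
      qed
      then show "\<exists>N. \<forall>n\<ge>N. m - 2 * inverse (real (Suc n)) \<le> (\<Sum>p\<in>S. P (r n) p)" by blast
    qed
    ultimately show False using m by simp
  qed
  ultimately show ?thesis by blast
qed



lemma near_opt:
  assumes "W1 E \<mu> \<nu> < \<infinity>" "0 < \<epsilon>"
  shows "\<exists>\<pi>. coupling \<mu> \<nu> \<pi> \<and> tcost E \<pi> < W1 E \<mu> \<nu> + ennreal \<epsilon>"
proof -
  have "W1 E \<mu> \<nu> + 0 < W1 E \<mu> \<nu> + ennreal \<epsilon>"
    using assms by (subst ennreal_add_left_cancel_less) auto
  then have "(INF \<pi>\<in>{\<pi>. coupling \<mu> \<nu> \<pi>}. tcost E \<pi>) < W1 E \<mu> \<nu> + ennreal \<epsilon>"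
    by (simp add: W1_def)
  then show ?thesis unfolding INF_less_iff by auto
qed

theorem proposition2p14:
  fixes E :: "'a \<Rightarrow> 'a \<Rightarrow> bool" and f :: "real \<Rightarrow> 'a \<Rightarrow> real"
    and s t :: real and x y :: 'a
  assumes "simple_graph E" and "connected_graph E" and "locally_finite E"
    and "finite {v. f 0 v \<noteq> 0}" and "finite {v. f 1 v \<noteq> 0}"
    and "W1_geodesic E f"
    and "0 \<le> s" and "s \<le> t" and "t \<le> 1"
    and "E x y"
    and "W1_orient E (f s) (f t) x y"
  shows "W1_orient E (f 0) (f 1) x y"
proof -
  note conn = assms(2)
  define A where "A = {v. f 0 v \<noteq> 0}"
  define B where "B = {v. f 1 v \<noteq> 0}"
  have finA: "finite A" and finB: "finite B" using assms(4,5) by (simp_all add: A_def B_def)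
  have pd: "prob_dist (f \<tau>)" if "\<tau> \<in> {0..1}" for \<tau> using assms(6) that unfolding W1_geodesic_def by blast
  have Wg: "W1 E (f \<sigma>) (f \<tau>) = ennreal \<bar>\<tau> - \<sigma>\<bar> * W1 E (f 0) (f 1)"
    if "\<sigma> \<in> {0..1}" "\<tau> \<in> {0..1}" for \<sigma> \<tau> using assms(6) that unfolding W1_geodesic_def by blast
  define W where "W = W1 E (f 0) (f 1)"
  obtain \<gamma> n k where geo: "is_geodesic E \<gamma> n" and cs0: "(\<gamma> 0, \<gamma> n) \<in> Csupp E (f s) (f t)"
    and kn: "k < n" and gx: "\<gamma> k = x" and gy: "\<gamma> (Suc k) = y"
    using assms(11) unfolding W1_orient_def by blast
  obtain \<pi>s where pis: "\<pi>s \<in> Pi1 E (f s) (f t)" and mpos: "0 < \<pi>s (\<gamma> 0, \<gamma> n)"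
    using cs0 unfolding Csupp_def by blast
  have cs: "coupling (f s) (f t) \<pi>s" and tcs: "tcost E \<pi>s = W1 E (f s) (f t)"
    using pis by (auto simp: Pi1_def)
  have f0nn: "0 \<le> f 0 a" for a using pd[of 0] by (simp add: prob_dist_def)
  have f1nn: "0 \<le> f 1 a" for a using pd[of 1] by (simp add: prob_dist_def)
  have f0s: "(f 0 has_sum 1) UNIV" using pd[of 0] by (simp add: prob_dist_def)
  have f1s: "(f 1 has_sum 1) UNIV" using pd[of 1] by (simp add: prob_dist_def)
  define pr where "pr p = f 0 (fst p) * f 1 (snd p)" for p
  have cpr: "coupling (f 0) (f 1) pr"
    unfolding coupling_def
  proof (intro conjI allI)
    show "0 \<le> pr p" for p using f0nn f1nn by (simp add: pr_def)
    show "((\<lambda>b. pr (a, b)) has_sum f 0 a) UNIV" for a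
      using has_sum_cmult_right[OF f1s, of "f 0 a"] by (simp add: pr_def)
    show "((\<lambda>a. pr (a, b)) has_sum f 1 b) UNIV" for b
      using has_sum_cmult_left[OF f0s, of "f 1 b"] by (simp add: pr_def)
  qed
  have "tcost E pr = ennreal (\<Sum>p\<in>A \<times> B. real (gdist E (fst p) (snd p)) * pr p)"
  proof (rule tcost_finite_supp)
    show "finite (A \<times> B)" using finA finB by simp
    show "pr p = 0" if "p \<notin> A \<times> B" for p using that by (cases p) (auto simp: pr_def A_def B_def)
    show "0 \<le> pr p" for p using f0nn f1nn by (simp add: pr_def)
  qed
  then have "tcost E pr < \<infinity>" by simp
  then have Wfin: "W < \<infinity>" using W1_le_tcost[OF cpr, where E=E] unfolding W_def by (rule le_less_trans[rotated])
  define w where "w = enn2real W"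
  have Ww: "W = ennreal w" "0 \<le> w" using Wfin by (simp_all add: w_def)
  have sI: "s \<in> {0..1}" and tI: "t \<in> {0..1}" using assms(7,8,9) by auto
  have W0s: "W1 E (f 0) (f s) = ennreal s * W" using Wg[of 0 s] sI assms(7) by (simp add: W_def)
  have Wst: "W1 E (f s) (f t) = ennreal (t - s) * W" using Wg[of s t] sI tI assms(8) by (simp add: W_def)
  have Wt1: "W1 E (f t) (f 1) = ennreal (1 - t) * W" using Wg[of t 1] tI assms(9) by (simp add: W_def)
  have sumW: "ennreal s * W + ennreal (t - s) * W + ennreal (1 - t) * W = W"
  proof -
    have "ennreal s * W + ennreal (t - s) * W + ennreal (1 - t) * W = (ennreal s + ennreal (t - s) + ennreal (1 - t)) * W"
      by (simp add: distrib_right)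
    also have "ennreal s + ennreal (t - s) + ennreal (1 - t) = ennreal (s + (t - s) + (1 - t))"
      using assms(7,8,9) by (simp add: ennreal_plus[symmetric] del: ennreal_plus)
    also have "\<dots> = 1" by simp
    finally show ?thesis by simp
  qed
  define S where "S = {p\<in>A\<times>B. gdist E (fst p) (\<gamma> 0) + gdist E (\<gamma> 0) (\<gamma> n) + gdist E (\<gamma> n) (snd p) = gdist E (fst p) (snd p)}"
  have H: "\<exists>P. coupling (f 0) (f 1) P \<and> (\<forall>p. p \<notin> A \<times> B \<longrightarrow> P p = 0)
        \<and> tcost E P \<le> W1 E (f 0) (f 1) + ennreal (2 * inverse (real (Suc j)))
        \<and> \<pi>s (\<gamma> 0, \<gamma> n) - 2 * inverse (real (Suc j)) \<le> (\<Sum>p\<in>S. P p)" for j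
  proof -
    define \<epsilon> where "\<epsilon> = inverse (real (Suc j))"
    have eps: "0 < \<epsilon>" by (simp add: \<epsilon>_def)
    have fin1: "W1 E (f 0) (f s) < \<infinity>" using W0s Ww by (simp add: ennreal_mult_less_top)
    have fin2: "W1 E (f t) (f 1) < \<infinity>" using Wt1 Ww by (simp add: ennreal_mult_less_top)
    obtain \<pi>1 where c1: "coupling (f 0) (f s) \<pi>1" and t1: "tcost E \<pi>1 < W1 E (f 0) (f s) + ennreal \<epsilon>"
      using near_opt[OF fin1 eps] by blast
    obtain \<pi>2 where c2: "coupling (f t) (f 1) \<pi>2" and t2: "tcost E \<pi>2 < W1 E (f t) (f 1) + ennreal \<epsilon>"
      using near_opt[OF fin2 eps] by blast
    have "tcost E \<pi>1 + tcost E \<pi>s + tcost E \<pi>2 \<le> (ennreal s * W + ennreal \<epsilon>) + ennreal (t - s) * W + (ennreal (1 - t) * W + ennreal \<epsilon>)"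
      using t1 t2 tcs W0s Wst Wt1 by (intro add_mono) auto
    also have "\<dots> = (ennreal s * W + ennreal (t - s) * W + ennreal (1 - t) * W) + (ennreal \<epsilon> + ennreal \<epsilon>)"
      by (simp add: ac_simps)
    also have "\<dots> = W1 E (f 0) (f 1) + ennreal (2 * \<epsilon>)"
    proof -
      have e2: "ennreal \<epsilon> + ennreal \<epsilon> = ennreal (2 * \<epsilon>)"
        using eps by (metis ennreal_plus less_imp_le mult_2)
      show ?thesis unfolding sumW by (simp only: W_def e2)
    qed
    finally have tot: "tcost E \<pi>1 + tcost E \<pi>s + tcost E \<pi>2 \<le> W1 E (f 0) (f 1) + ennreal (2 * \<epsilon>)" .
    have zA: "\<And>a. a \<notin> A \<Longrightarrow> f 0 a = 0" by (simp add: A_def)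
    have zB: "\<And>b. b \<notin> B \<Longrightarrow> f 1 b = 0" by (simp add: B_def)
    have Wfin': "W1 E (f 0) (f 1) < \<infinity>" using Wfin by (simp only: W_def)
    have "\<exists>P. coupling (f 0) (f 1) P \<and> (\<forall>p. p \<notin> A \<times> B \<longrightarrow> P p = 0)
     \<and> tcost E P \<le> W1 E (f 0) (f 1) + ennreal (2*\<epsilon>)
     \<and> \<pi>s (\<gamma> 0, \<gamma> n) - 2*\<epsilon> \<le> (\<Sum>p\<in>{p\<in>A\<times>B. gdist E (fst p) (\<gamma> 0) + gdist E (\<gamma> 0) (\<gamma> n) + gdist E (\<gamma> n) (snd p) = gdist E (fst p) (snd p)}. P p)"
      by (rule eps_step[OF conn c1 cs c2 finA zA finB zB Wfin' tot less_imp_le[OF eps]])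
    then show ?thesis unfolding S_def \<epsilon>_def .
  qed
  have "S \<subseteq> A \<times> B" by (auto simp: S_def)
  from limit_step[OF finA finB this mpos Ww[unfolded W_def] H]
  obtain L p where L: "L \<in> Pi1 E (f 0) (f 1)" and pS: "p \<in> S" and Lp: "0 < L p" by blast
  obtain a b where p: "p = (a,b)" by (cases p)
  have csab: "(a, b) \<in> Csupp E (f 0) (f 1)" using L Lp p unfolding Csupp_def by blast
  have ng: "n = gdist E (\<gamma> 0) (\<gamma> n)" using geo unfolding is_geodesic_def by blast
  have e0: "gdist E a (\<gamma> 0) + gdist E (\<gamma> 0) (\<gamma> n) + gdist E (\<gamma> n) b = gdist E a b"
    using pS unfolding p S_def by simp
  have eq: "gdist E a (\<gamma> 0) + n + gdist E (\<gamma> n) b = gdist E a b" using e0 by (simp add: ng[symmetric])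
  obtain \<delta> N j where "is_geodesic E \<delta> N" "\<delta> 0 = a" "\<delta> N = b" "j < N" "\<delta> j = x" "\<delta> (Suc j) = y"
    using geodesic_through[OF conn geo kn gx gy eq] by blast
  then show ?thesis unfolding W1_orient_def using assms(10) csab by blast
qed


end
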